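(* Let $n\ge1$, $0<p_{\mathrm{tot}}\le1$, and let $Y$ be a discrete random variable. Let $$\mathcal Z=\Big\{\max\big(\{Y\}\cup\{X_i\}_{i=1}^n\big)\ \Big|\ X_i\sim\mathrm{geom}(p_i),\ 0<p_i\le1,\ \prod_{i=1}^n p_i=p_{\mathrm{tot}}\Big\},$$ where $Y,X_1,\dots,X_n$ are mutually independent. Let $Z_{\mathrm{hom}}\in\mathcal Z$ be the member with $p_1=\dots=p_n$, i.e. $Z_{\mathrm{hom}}=\max(\{Y\}\cup\{X_{\mathrm{hom},i}\}_{i=1}^n)$ with $X_{\mathrm{hom},i}\sim\mathrm{geom}(\sqrt[n]{p_{\mathrm{tot}}})$. Then for every $Z\in\mathcal Z$, $Z\ge_{\mathrm{st}}Z_{\mathrm{hom}}$.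
   Context: $\mathrm{geom}(p)$ denotes the geometric distribution on $\{1,2,3,\dots\}$ with success probability $p$, so $\Pr(X\le k)=1-(1-p)^k$. For random variables $A,B$, $A\ge_{\mathrm{st}}B$ means $\Pr(A>z)\ge\Pr(B>z)$ for all real $z$. *)

theory Defs
  imports "HOL-Probability.Probability"
begin

text \<open>geom(p) on {1,2,3,...}: number of trials up to and including the first success.
  The library's geometric_pmf counts failures (support {0,1,...}), so we shift by one.\<close>
definition geom_pmf :: "real \<Rightarrow> nat pmf" where
  "geom_pmf p = map_pmf Suc (geometric_pmf p)"

text \<open>Independence is encoded by sequential (product) binding of the distributions.\<close>
fun max_geom_dist :: "real pmf \<Rightarrow> real list \<Rightarrow> real pmf" where
  "max_geom_dist DY [] = DY"
| "max_geom_dist DY (p # ps) =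
     bind_pmf (max_geom_dist DY ps) (\<lambda>z. bind_pmf (geom_pmf p) (\<lambda>x. return_pmf (max z (real x))))"

definition stoch_ge :: "real pmf \<Rightarrow> real pmf \<Rightarrow> bool" where
  "stoch_ge A B \<longleftrightarrow> (\<forall>z::real. measure_pmf.prob A {w. w > z} \<ge> measure_pmf.prob B {w. w > z})"

end

theory Submission
  imports Defs
begin

lemma term_le:
  fixes a b :: real
  assumes "0 \<le> b" "b \<le> a" "j \<le> m"
  shows "b^m * a^j \<le> a^m * b^j"
proof -
  have "b^m * a^j = b^j * (b^(m-j) * a^j)"
    using assms by (simp add: power_add[symmetric] mult_ac)
  also have "\<dots> \<le> b^j * (a^(m-j) * a^j)"
    using assms by (intro mult_left_mono mult_right_mono power_mono) auto
  also have "\<dots> = a^m * b^j"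
    using assms by (simp add: power_add[symmetric] mult_ac)
  finally show ?thesis .
qed

lemma ratio_mono:
  fixes a b :: real
  assumes "0 \<le> b" "b \<le> a" "a < 1"
  shows "b^m * (1-b) / (1 - b^Suc m) \<le> a^m * (1-a) / (1 - a^Suc m)"
proof -
  have sa: "1 - a^Suc m = (1-a) * (\<Sum>i\<le>m. a^i)" by (simp add: sum_gp_basic)
  have sb: "1 - b^Suc m = (1-b) * (\<Sum>i\<le>m. b^i)" by (simp add: sum_gp_basic)
  have pa: "(\<Sum>i\<le>m. a^i) \<ge> 1"
  proof -
    have "(\<Sum>i\<le>m. a^i) \<ge> (\<Sum>i\<in>{0}. a^i)"
      using assms by (intro sum_mono2) auto
    thus ?thesis by simp
  qed
  have pb: "(\<Sum>i\<le>m. b^i) \<ge> 1"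
  proof -
    have "(\<Sum>i\<le>m. b^i) \<ge> (\<Sum>i\<in>{0}. b^i)"
      using assms by (intro sum_mono2) auto
    thus ?thesis by simp
  qed
  have key: "b^m * (\<Sum>i\<le>m. a^i) \<le> a^m * (\<Sum>i\<le>m. b^i)"
    unfolding sum_distrib_left using assms by (intro sum_mono term_le) auto
  have "b^m * (1-b) / (1 - b^Suc m) = b^m / (\<Sum>i\<le>m. b^i)"
    using assms pb by (subst sb) simp
  also have "\<dots> \<le> a^m / (\<Sum>i\<le>m. a^i)"
    using pa pb key by (simp add: divide_simps mult_ac)
  also have "\<dots> = a^m * (1-a) / (1 - a^Suc m)"
    using assms pa by (subst sa) simp
  finally show ?thesis .
qed

lemma base_pos:
  fixes x :: real assumes "x \<le> 0" "k \<ge> 1"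
  shows "0 < 1 - (1 - exp x)^k"
proof -
  have "0 \<le> 1 - exp x" "1 - exp x < 1" using assms by auto
  hence "(1 - exp x)^k < 1" using assms by (simp add: power_less_one_iff)
  thus ?thesis by simp
qed

lemma fconvex:
  fixes m :: nat
  shows "convex_on {..0::real} (\<lambda>t. - ln (1 - (1 - exp t)^Suc m))"
proof (rule convex_on_realI[where f' = "\<lambda>x. - (Suc m * (1 - exp x)^m * exp x) / (1 - (1 - exp x)^Suc m)"])
  show "connected {..0::real}" by simp
next
  fix x :: real assume "x \<in> {..0}"
  hence p: "0 < 1 - (1 - exp x)^Suc m" using base_pos[of x "Suc m"] by auto
  show "((\<lambda>t. - ln (1 - (1 - exp t)^Suc m)) has_real_derivative
     - (Suc m * (1 - exp x)^m * exp x) / (1 - (1 - exp x)^Suc m)) (at x)"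
    using p apply (auto intro!: derivative_eq_intros simp del: power_Suc)
    done
next
  fix x y :: real assume xy: "x \<in> {..0}" "y \<in> {..0}" "x \<le> y"
  define a where "a = 1 - exp x"
  define b where "b = 1 - exp y"
  have ab: "0 \<le> b" "b \<le> a" "a < 1" using xy by (auto simp: a_def b_def)
  have "b^m * (1-b) / (1 - b^Suc m) \<le> a^m * (1-a) / (1 - a^Suc m)"
    by (rule ratio_mono[OF ab])
  hence "Suc m * (b^m * (1-b) / (1 - b^Suc m)) \<le> Suc m * (a^m * (1-a) / (1 - a^Suc m))"
    by (intro mult_left_mono) auto
  moreover have "exp x = 1 - a" "exp y = 1 - b" by (auto simp: a_def b_def)
  ultimately show "- (Suc m * (1 - exp x)^m * exp x) / (1 - (1 - exp x)^Suc m)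
      \<le> - (Suc m * (1 - exp y)^m * exp y) / (1 - (1 - exp y)^Suc m)"
    by (simp add: a_def[symmetric] b_def[symmetric] mult_ac)
qed


lemma prod_list_nth: "prod_list (xs :: real list) = (\<Prod>i<length xs. xs ! i)"
proof (induction xs)
  case (Cons a xs)
  have "(\<Prod>i<length (a#xs). (a#xs)!i) = (a#xs)!0 * (\<Prod>i<length xs. (a#xs)!(Suc i))"
    unfolding length_Cons by (rule prod.lessThan_Suc_shift)
  then show ?case using Cons by simp
qed simp

lemma prod_ineq:
  fixes ps :: "real list" and q :: real and k n :: nat
  assumes len: "length ps = n" and n: "n \<ge> 1" and ps: "\<forall>p\<in>set ps. 0 < p \<and> p \<le> 1"
    and q: "0 < q" "q \<le> 1" and pr: "prod_list ps = q^n"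
  shows "prod_list (map (\<lambda>p. 1 - (1 - p)^k) ps) \<le> (1 - (1 - q)^k)^n"
proof (cases k)
  case 0
  then show ?thesis using n len by (cases ps) auto
next
  case (Suc m)
  define f where "f = (\<lambda>t::real. - ln (1 - (1 - exp t)^Suc m))"
  define F where "F = (\<lambda>p::real. 1 - (1 - p)^Suc m)"
  have psi: "0 < ps!i \<and> ps!i \<le> 1" if "i < n" for i using ps len that nth_mem by blast
  have Fpos: "F p > 0" if "0 < p" "p \<le> 1" for p
    using base_pos[of "ln p" "Suc m"] that by (simp add: F_def)
  have fF: "f (ln p) = - ln (F p)" if "0 < p" for p using that by (simp add: f_def F_def)
  have "f (\<Sum>i\<in>{..<n}. (1 / real n) *\<^sub>R ln (ps!i)) \<le> (\<Sum>i\<in>{..<n}. (1 / real n) * f (ln (ps!i)))"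
  proof (rule convex_on_sum)
    show "convex_on {..0} f" unfolding f_def by (rule fconvex)
  qed (use n psi in \<open>auto simp: lessThan_empty_iff\<close>)
  moreover have "(\<Sum>i\<in>{..<n}. (1 / real n) *\<^sub>R ln (ps!i)) = ln q"
  proof -
    have "(\<Sum>i\<in>{..<n}. ln (ps!i)) = ln (\<Prod>i<n. ps!i)"
      by (subst ln_prod) (use psi in fastforce)+
    also have "\<dots> = real n * ln q" using pr len q by (simp add: prod_list_nth ln_realpow)
    finally show ?thesis using n by (simp add: sum_divide_distrib[symmetric])
  qed
  ultimately have "- ln (F q) \<le> (1 / real n) * (\<Sum>i<n. - ln (F (ps!i)))"
    using q psi by (simp add: fF sum_distrib_left)
  hence "(\<Sum>i<n. ln (F (ps!i))) \<le> real n * ln (F q)"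
    using n by (simp add: sum_negf field_simps)
  moreover have "(\<Sum>i<n. ln (F (ps!i))) = ln (\<Prod>i<n. F (ps!i))"
    using psi Fpos by (subst ln_prod) (auto simp: less_imp_neq[symmetric])
  moreover have "real n * ln (F q) = ln (F q ^ n)" using Fpos q by (simp add: ln_realpow)
  ultimately have "ln (\<Prod>i<n. F (ps!i)) \<le> ln (F q ^ n)" by simp
  moreover have "(\<Prod>i<n. F (ps!i)) > 0" using psi Fpos by (intro prod_pos) auto
  moreover have "F q ^ n > 0" using Fpos q by simp
  ultimately have "(\<Prod>i<n. F (ps!i)) \<le> F q ^ n" by simp
  moreover have "prod_list (map F ps) = (\<Prod>i<n. F (ps!i))"
    using len by (simp add: prod_list_nth)
  ultimately show ?thesis using Suc by (simp add: F_def)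
qed


lemma geom_cdf:
  assumes "0 < p" "p \<le> 1"
  shows "measure_pmf.prob (geom_pmf p) {x. real x \<le> z} = 1 - (1 - p)^(nat \<lfloor>z\<rfloor>)"
proof -
  have pre: "Suc -` {x. real x \<le> z} = {..<nat \<lfloor>z\<rfloor>}"
  proof (intro set_eqI iffI)
    fix n assume "n \<in> Suc -` {x. real x \<le> z}"
    hence "real (Suc n) \<le> z" by simp
    hence "int (Suc n) \<le> \<lfloor>z\<rfloor>" by (simp add: le_floor_iff)
    thus "n \<in> {..<nat \<lfloor>z\<rfloor>}" by simp
  next
    fix n assume "n \<in> {..<nat \<lfloor>z\<rfloor>}"
    hence "int (Suc n) \<le> \<lfloor>z\<rfloor>" by simp
    hence "real (Suc n) \<le> z" by (simp add: le_floor_iff)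
    thus "n \<in> Suc -` {x. real x \<le> z}" by simp
  qed
  have "measure_pmf.prob (geom_pmf p) {x. real x \<le> z}
      = (\<Sum>n<nat \<lfloor>z\<rfloor>. (1 - p)^n * p)"
    unfolding geom_pmf_def measure_map_pmf pre
    using assms by (simp add: measure_measure_pmf_finite)
  also have "\<dots> = 1 - (1 - p)^(nat \<lfloor>z\<rfloor>)"
    using one_diff_power_eq[of "1 - p" "nat \<lfloor>z\<rfloor>"]
    by (simp add: sum_distrib_left mult_ac)
  finally show ?thesis .
qed

lemma pair_prob:
  "measure_pmf.prob (pair_pmf M N) (A \<times> B) = measure_pmf.prob M A * measure_pmf.prob N B"
proof -
  have "measure_pmf.prob (pair_pmf M N) (A \<times> B)
      = measure_pmf.prob (pair_pmf M N) ((A \<times> B) \<inter> set_pmf (pair_pmf M N))"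
    by (rule measure_Int_set_pmf[symmetric])
  also have "(A \<times> B) \<inter> set_pmf (pair_pmf M N) = (A \<inter> set_pmf M) \<times> (B \<inter> set_pmf N)"
    by auto
  also have "measure_pmf.prob (pair_pmf M N) \<dots>
      = measure_pmf.prob M (A \<inter> set_pmf M) * measure_pmf.prob N (B \<inter> set_pmf N)"
    by (rule measure_pmf_prob_product) (auto intro: countable_Int2 countable_set_pmf)
  also have "\<dots> = measure_pmf.prob M A * measure_pmf.prob N B"
    by (simp add: measure_Int_set_pmf)
  finally show ?thesis .
qed

lemma mgd_step:
  "max_geom_dist DY (p # ps) =
    map_pmf (\<lambda>(z, x). max z (real x)) (pair_pmf (max_geom_dist DY ps) (geom_pmf p))"
  by (simp add: pair_pmf_def map_pmf_def bind_assoc_pmf bind_return_pmf)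

lemma mgd_cdf:
  assumes "\<forall>p\<in>set ps. 0 < p \<and> p \<le> 1"
  shows "measure_pmf.prob (max_geom_dist DY ps) {w. w \<le> z}
    = measure_pmf.prob DY {w. w \<le> z} * prod_list (map (\<lambda>p. 1 - (1 - p)^(nat \<lfloor>z\<rfloor>)) ps)"
  using assms
proof (induction ps)
  case Nil
  then show ?case by simp
next
  case (Cons p ps)
  have pre: "(\<lambda>(z', x). max z' (real x)) -` {w. w \<le> z} = {w. w \<le> z} \<times> {x. real x \<le> z}"
    by auto
  show ?case
    unfolding mgd_step measure_map_pmf pre pair_prob
    using Cons by (simp add: geom_cdf mult_ac)
qed

theorem mainTheorem4:
  fixes n :: nat and ptot :: real and DY :: "real pmf" and ps :: "real list"
  assumes "n \<ge> 1"
    and "0 < ptot" and "ptot \<le> 1"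
    and "length ps = n"
    and "\<forall>p \<in> set ps. 0 < p \<and> p \<le> 1"
    and "prod_list ps = ptot"
  shows "stoch_ge (max_geom_dist DY ps) (max_geom_dist DY (replicate n (root n ptot)))"
  unfolding stoch_ge_def
proof
  fix z :: real
  define q where "q = root n ptot"
  define k where "k = nat \<lfloor>z\<rfloor>"
  have q: "0 < q" "q \<le> 1" "q^n = ptot"
    using assms by (auto simp: q_def real_root_gt_zero)
  have q1: "q \<le> 1" using assms real_root_le_iff[of n ptot 1] by (simp add: q_def)
  have qs: "\<forall>p\<in>set (replicate n q). 0 < p \<and> p \<le> 1" using q q1 by simp
  have compl: "measure_pmf.prob M {w. w > z} = 1 - measure_pmf.prob M {w. w \<le> z}" for M :: "real pmf"
  proof -
    have "{w. w > z} = UNIV - {w. w \<le> z}" by auto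
    thus ?thesis using measure_pmf.prob_compl[of "{w. w \<le> z}" M] by simp
  qed
  have ineq: "prod_list (map (\<lambda>p. 1 - (1 - p)^k) ps) \<le> (1 - (1 - q)^k)^n"
    by (rule prod_ineq) (use assms q q1 in auto)
  have D: "measure_pmf.prob DY {w. w \<le> z} \<ge> 0" by simp
  have "measure_pmf.prob DY {w. w \<le> z} * prod_list (map (\<lambda>p. 1 - (1 - p)^k) ps)
      \<le> measure_pmf.prob DY {w. w \<le> z} * prod_list (map (\<lambda>p. 1 - (1 - p)^k) (replicate n q))"
    using ineq D by (simp add: mult_left_mono prod_list_replicate)
  then show "measure_pmf.prob (max_geom_dist DY (replicate n (root n ptot))) {w. w > z}
      \<le> measure_pmf.prob (max_geom_dist DY ps) {w. w > z}"
    unfolding compl q_def[symmetric]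
    using mgd_cdf[OF assms(5), of DY z] mgd_cdf[OF qs, of DY z] by (simp add: k_def)
qed

end
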